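(* Let $P$ be the Petersen graph on vertex set $\{1,\dots,10\}$ with edges $12,23,34,45,51$ (outer pentagon), $16,27,38,49,5\,10$ (spokes), and $68,8\,10,10\,7,79,96$ (inner pentagram). Let $X$ be the graph on $\{1,\dots,10\}$ with the 15 edges $\{10,1\},\{1,3\},\{3,4\},\{4,9\},\{9,6\},\{6,8\},\{8,5\},\{5,2\},\{2,7\},\{7,10\}$ (a Hamilton cycle) together with $\{2,8\},\{3,10\},\{4,5\},\{1,6\},\{7,9\}$. Then $KC(P)\cong G(10,3)$ and $KC(X)\cong G(10,3)$, while $X$ is not isomorphic to $P$. Thus the Desargues graph $G(10,3)$ is the Kronecker cover of two non-isomorphic simple graphs.
   Context: For a simple graph $G$, the Kronecker cover $KC(G)$ is the graph with vertex set $V(G)\times\{0,1\}$ in which $(u,a)$ is adjacent to $(v,b)$ if and only if $uv\in E(G)$ and $a\neq b$. The generalized Petersen graph $G(n,k)$ has vertices $u_0,\dots,u_{n-1},v_0,\dots,v_{n-1}$ and edges $u_iu_{i+1}$, $u_iv_i$ and $v_iv_{i+k}$, with indices taken mod $n$. $G(10,3)$ is the Desargues graph and $G(5,2)$ is the Petersen graph. The graph $X$ arises as follows: it has edges $\{i,\alpha(j)\}$ for each edge $ij$ of $P$, where $\alpha=(1\,8)(2\,10)(3\,5)$ is an involutive automorphism of $P$ fixing $4,6,7,9$. *)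

theory Defs
  imports Main
begin

definition simple_graph :: "'a set \<Rightarrow> 'a set set \<Rightarrow> bool" where
  "simple_graph V E \<longleftrightarrow> (\<forall>e\<in>E. \<exists>u v. u \<noteq> v \<and> u \<in> V \<and> v \<in> V \<and> e = {u, v})"

definition graph_iso :: "'a set \<Rightarrow> 'a set set \<Rightarrow> 'b set \<Rightarrow> 'b set set \<Rightarrow> bool" where
  "graph_iso V E W F \<longleftrightarrow>
     (\<exists>f. bij_betw f V W \<and> (\<forall>u\<in>V. \<forall>v\<in>V. {u, v} \<in> E \<longleftrightarrow> {f u, f v} \<in> F))"

definition kc_verts :: "'a set \<Rightarrow> ('a \<times> bool) set" where
  "kc_verts V = V \<times> UNIV"

definition kc_edges :: "'a set set \<Rightarrow> ('a \<times> bool) set set" where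
  "kc_edges E = {{(u, a), (v, b)} | u v a b. {u, v} \<in> E \<and> a \<noteq> b}"

text \<open>Generalized Petersen graph G(n,k): (False,i) is u_i, (True,i) is v_i, 0 \<le> i < n.\<close>

definition gp_verts :: "nat \<Rightarrow> (bool \<times> nat) set" where
  "gp_verts n = UNIV \<times> {..<n}"

definition gp_edges :: "nat \<Rightarrow> nat \<Rightarrow> (bool \<times> nat) set set" where
  "gp_edges n k =
     {{(False, i), (False, (i + 1) mod n)} | i. i < n} \<union>
     {{(False, i), (True, i)} | i. i < n} \<union>
     {{(True, i), (True, (i + k) mod n)} | i. i < n}"

definition ten :: "nat set" where "ten = {1..10}"

definition petersen_edges :: "nat set set" where
  "petersen_edges = {{1,2},{2,3},{3,4},{4,5},{5,1},
                     {1,6},{2,7},{3,8},{4,9},{5,10},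
                     {6,8},{8,10},{10,7},{7,9},{9,6}}"

definition X_edges :: "nat set set" where
  "X_edges = {{10,1},{1,3},{3,4},{4,9},{9,6},{6,8},{8,5},{5,2},{2,7},{7,10},
              {2,8},{3,10},{4,5},{1,6},{7,9}}"

end

theory Submission
  imports Defs
begin

lemma lt10: "{..<10::nat} = {0,1,2,3,4,5,6,7,8,9}" by auto

lemma ten_eq: "ten = {1,2,3,4,5,6,7,8,9,10}" unfolding ten_def by (auto; presburger)

lemma kc_mem: "{(u,a),(v,b)} \<in> kc_edges E \<longleftrightarrow> ({u,v} \<in> E \<and> a \<noteq> b)"
  unfolding kc_edges_def by (auto simp: doubleton_eq_iff insert_commute)

lemma iso_lemma:
  assumes bij: "bij_betw f V W" and g: "\<forall>x\<in>W. g x \<in> V \<and> f (g x) = x"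
    and fw: "\<forall>u\<in>V. \<forall>v\<in>V. {u,v} \<in> E \<longrightarrow> {f u, f v} \<in> F"
    and bw: "\<forall>x\<in>W. \<forall>y\<in>W. {x,y} \<in> F \<longrightarrow> {g x, g y} \<in> E"
  shows "graph_iso V E W F"
  unfolding graph_iso_def
proof (intro exI conjI ballI iffI)
  show "bij_betw f V W" by fact
next
  fix u v assume "u \<in> V" "v \<in> V" "{u,v} \<in> E" then show "{f u, f v} \<in> F" using fw by blast
next
  fix u v assume uv: "u \<in> V" "v \<in> V" and e: "{f u, f v} \<in> F"
  have fuw: "f u \<in> W" "f v \<in> W" using bij uv by (auto simp: bij_betw_def)
  have inj: "inj_on f V" using bij by (auto simp: bij_betw_def)
  have "g (f u) = u" using g fuw inj uv by (metis inj_on_def)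
  moreover have "g (f v) = v" using g fuw inj uv by (metis inj_on_def)
  ultimately show "{u,v} \<in> E" using bw fuw e by metis
qed

definition fP :: "nat \<times> bool \<Rightarrow> bool \<times> nat" where
  "fP p = (if snd p then [(False,0),(False,5),(False,9),(False,3),(False,7),(False,1),(True,0),(True,4),(True,8),(True,2),(True,6)] ! fst p else [(False,0),(False,0),(False,4),(False,8),(False,2),(False,6),(True,5),(True,9),(True,3),(True,7),(True,1)] ! fst p)"

definition gP :: "bool \<times> nat \<Rightarrow> nat \<times> bool" where
  "gP p = (if fst p then [(6,True),(10,False),(9,True),(8,False),(7,True),(6,False),(10,True),(9,False),(8,True),(7,False)] ! snd p else [(1,False),(5,True),(4,False),(3,True),(2,False),(1,True),(5,False),(4,True),(3,False),(2,True)] ! snd p)"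

definition fX :: "nat \<times> bool \<Rightarrow> bool \<times> nat" where
  "fX p = (if snd p then [(False,0),(False,3),(True,8),(True,0),(True,2),(False,7),(False,9),(True,6),(False,5),(True,4),(False,1)] ! fst p else [(False,0),(False,0),(False,6),(False,2),(True,7),(True,5),(False,4),(True,1),(False,8),(True,9),(True,3)] ! fst p)"

definition gX :: "bool \<times> nat \<Rightarrow> nat \<times> bool" where
  "gX p = (if fst p then [(3,True),(7,False),(4,True),(10,False),(9,True),(5,False),(7,True),(4,False),(2,True),(9,False)] ! snd p else [(1,False),(10,True),(3,False),(1,True),(6,False),(8,True),(2,False),(5,True),(8,False),(6,True)] ! snd p)"

lemma gp_explicit: "gp_edges 10 3 = {{(True,0),(True,3)},{(True,1),(True,4)},{(True,2),(True,5)},{(True,3),(True,6)},{(True,4),(True,7)},{(True,5),(True,8)},{(True,6),(True,9)},{(True,7),(True,0)},{(True,8),(True,1)},{(True,9),(True,2)},{(False,0),(True,0)},{(False,1),(True,1)},{(False,2),(True,2)},{(False,3),(True,3)},{(False,4),(True,4)},{(False,5),(True,5)},{(False,6),(True,6)},{(False,7),(True,7)},{(False,8),(True,8)},{(False,9),(True,9)},{(False,0),(False,1)},{(False,1),(False,Suc (Suc 0))},{(False,2),(False,3)},{(False,3),(False,4)},{(False,4),(False,5)},{(False,5),(False,6)},{(False,6),(False,7)},{(False,7),(False,8)},{(False,8),(False,9)},{(False,9),(False,0)}}"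
proof -
  have "gp_edges 10 3 = (\<lambda>i. {(False, i), (False, (i + 1) mod 10)}) ` {..<10} \<union>
     (\<lambda>i. {(False, i), (True, i)}) ` {..<10} \<union> (\<lambda>i. {(True, i), (True, (i + 3) mod 10)}) ` {..<10}"
    unfolding gp_edges_def by auto
  then show ?thesis unfolding lt10 by simp
qed

lemma gp_pairs: "{x,y} \<in> gp_edges 10 3 \<Longrightarrow> (x,y) \<in> {((False,0),(False,1)),((False,1),(False,0)),((False,0),(True,0)),((True,0),(False,0)),((True,0),(True,3)),((True,3),(True,0)),((False,1),(False,2)),((False,2),(False,1)),((False,1),(True,1)),((True,1),(False,1)),((True,1),(True,4)),((True,4),(True,1)),((False,2),(False,3)),((False,3),(False,2)),((False,2),(True,2)),((True,2),(False,2)),((True,2),(True,5)),((True,5),(True,2)),((False,3),(False,4)),((False,4),(False,3)),((False,3),(True,3)),((True,3),(False,3)),((True,3),(True,6)),((True,6),(True,3)),((False,4),(False,5)),((False,5),(False,4)),((False,4),(True,4)),((True,4),(False,4)),((True,4),(True,7)),((True,7),(True,4)),((False,5),(False,6)),((False,6),(False,5)),((False,5),(True,5)),((True,5),(False,5)),((True,5),(True,8)),((True,8),(True,5)),((False,6),(False,7)),((False,7),(False,6)),((False,6),(True,6)),((True,6),(False,6)),((True,6),(True,9)),((True,9),(True,6)),((False,7),(False,8)),((False,8),(False,7)),((False,7),(True,7)),((True,7),(False,7)),((True,7),(True,0)),((True,0),(True,7)),((False,8),(False,9)),((False,9),(False,8)),((False,8),(True,8)),((True,8),(False,8)),((Tr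ue,8),(True,1)),((True,1),(True,8)),((False,9),(False,0)),((False,0),(False,9)),((False,9),(True,9)),((True,9),(False,9)),((True,9),(True,2)),((True,2),(True,9))}"
  unfolding gp_explicit by (simp add: doubleton_eq_iff; elim disjE conjE; simp)

lemma P_pairs: "{a,b} \<in> petersen_edges \<longleftrightarrow> (a,b) \<in> {(1,2),(2,1),(2,3),(3,2),(3,4),(4,3),(4,5),(5,4),(5,1),(1,5),(1,6),(6,1),(2,7),(7,2),(3,8),(8,3),(4,9),(9,4),(5,10),(10,5),(6,8),(8,6),(8,10),(10,8),(10,7),(7,10),(7,9),(9,7),(9,6),(6,9)}"
  unfolding petersen_edges_def by (auto simp: doubleton_eq_iff)

lemma X_pairs: "{a,b} \<in> X_edges \<longleftrightarrow> (a,b) \<in> {(10,1),(1,10),(1,3),(3,1),(3,4),(4,3),(4,9),(9,4),(9,6),(6,9),(6,8),(8,6),(8,5),(5,8),(5,2),(2,5),(2,7),(7,2),(7,10),(10,7),(2,8),(8,2),(3,10),(10,3),(4,5),(5,4),(1,6),(6,1),(7,9),(9,7)}"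
  unfolding X_edges_def by (auto simp: doubleton_eq_iff)

lemma kc_single: "{x} \<notin> kc_edges E"
  unfolding kc_edges_def by (auto simp: doubleton_eq_iff)

lemma bP: "bij_betw fP (kc_verts ten) (gp_verts 10)"
  unfolding bij_betw_def kc_verts_def gp_verts_def ten_eq lt10 UNIV_bool
  by (simp add: fP_def; auto)

lemma bX: "bij_betw fX (kc_verts ten) (gp_verts 10)"
  unfolding bij_betw_def kc_verts_def gp_verts_def ten_eq lt10 UNIV_bool
  by (simp add: fX_def; auto)

lemma gPok: "\<forall>x\<in>gp_verts 10. gP x \<in> kc_verts ten \<and> fP (gP x) = x"
  unfolding kc_verts_def gp_verts_def ten_eq lt10 UNIV_bool
  by (simp add: fP_def gP_def)

lemma gXok: "\<forall>x\<in>gp_verts 10. gX x \<in> kc_verts ten \<and> fX (gX x) = x"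
  unfolding kc_verts_def gp_verts_def ten_eq lt10 UNIV_bool
  by (simp add: fX_def gX_def)

lemma P_fw0: "{(u,a),(v,b)} \<in> kc_edges petersen_edges \<Longrightarrow> {fP (u,a), fP (v,b)} \<in> gp_edges 10 3"
  apply (simp add: kc_mem P_pairs)
  apply (elim conjE disjE)
  by (cases a; simp add: fP_def gp_explicit doubleton_eq_iff)+

lemma X_fw0: "{(u,a),(v,b)} \<in> kc_edges X_edges \<Longrightarrow> {fX (u,a), fX (v,b)} \<in> gp_edges 10 3"
  apply (simp add: kc_mem X_pairs)
  apply (elim conjE disjE)
  by (cases a; simp add: fX_def gp_explicit doubleton_eq_iff)+

lemma P_bw: "{x,y} \<in> gp_edges 10 3 \<Longrightarrow> {gP x, gP y} \<in> kc_edges petersen_edges"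
  apply (drule gp_pairs)
  apply simp
  apply (elim conjE disjE)
  by (simp_all add: gP_def kc_mem P_pairs)

lemma X_bw: "{x,y} \<in> gp_edges 10 3 \<Longrightarrow> {gX x, gX y} \<in> kc_edges X_edges"
  apply (drule gp_pairs)
  apply simp
  apply (elim conjE disjE)
  by (simp_all add: gX_def kc_mem X_pairs)

lemma isoP: "graph_iso (kc_verts ten) (kc_edges petersen_edges) (gp_verts 10) (gp_edges 10 3)"
  apply (rule iso_lemma[OF bP gPok])
  using P_fw0 P_bw by auto

lemma isoX: "graph_iso (kc_verts ten) (kc_edges X_edges) (gp_verts 10) (gp_edges 10 3)"
  apply (rule iso_lemma[OF bX gXok])
  using X_fw0 X_bw by auto

lemma sg: "u \<noteq> v \<Longrightarrow> u \<in> V \<Longrightarrow> v \<in> V \<Longrightarrow> \<exists>a b. a \<noteq> b \<and> a \<in> V \<and> b \<in> V \<and> {u,v} = {a,b}"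
  by blast

lemma sgP: "simple_graph ten petersen_edges"
  unfolding simple_graph_def petersen_edges_def
  by (intro ballI; elim insertE emptyE; hypsubst; rule sg; simp add: ten_def)

lemma sgX: "simple_graph ten X_edges"
  unfolding simple_graph_def X_edges_def
  by (intro ballI; elim insertE emptyE; hypsubst; rule sg; simp add: ten_def)

definition PN :: "nat \<Rightarrow> nat set" where "PN a = set ([[],[2,5,6],[1,3,7],[2,4,8],[3,5,9],[4,1,10],[1,8,9],[2,10,9],[3,6,10],[4,7,6],[5,8,7]] ! a)"

lemma P_N: "{a,b} \<in> petersen_edges \<Longrightarrow> b \<in> PN a"
  unfolding P_pairs by (simp; elim disjE conjE; simp add: PN_def)

lemma P_N2: "{a,b} \<in> petersen_edges \<Longrightarrow> PN a \<inter> PN b = {}"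
  unfolding P_pairs by (simp; elim disjE conjE; simp add: PN_def)

lemma P_notri: "{a,b} \<in> petersen_edges \<Longrightarrow> {b,c} \<in> petersen_edges \<Longrightarrow> {a,c} \<in> petersen_edges \<Longrightarrow> False"
  using P_N[of b c] P_N[of a c] P_N2[of a b] by blast

lemma noniso: "\<not> graph_iso ten X_edges ten petersen_edges"
proof
  assume "graph_iso ten X_edges ten petersen_edges"
  then obtain f where f: "\<forall>u\<in>ten. \<forall>v\<in>ten. {u, v} \<in> X_edges \<longleftrightarrow> {f u, f v} \<in> petersen_edges"
    unfolding graph_iso_def by blast
  have m: "1 \<in> ten" "3 \<in> ten" "(10::nat) \<in> ten" by (auto simp: ten_def)
  have "{1,3} \<in> X_edges" "{3,10} \<in> X_edges" "{1,10} \<in> X_edges"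
    by (auto simp: X_edges_def doubleton_eq_iff)
  then have "{f 1, f 3} \<in> petersen_edges" "{f 3, f 10} \<in> petersen_edges" "{f 1, f 10} \<in> petersen_edges"
    using f m by blast+
  then show False using P_notri by blast
qed

theorem mainTheorem5:
  shows "simple_graph ten petersen_edges \<and> simple_graph ten X_edges
    \<and> graph_iso (kc_verts ten) (kc_edges petersen_edges) (gp_verts 10) (gp_edges 10 3)
    \<and> graph_iso (kc_verts ten) (kc_edges X_edges) (gp_verts 10) (gp_edges 10 3)
    \<and> \<not> graph_iso ten X_edges ten petersen_edges"
  using sgP sgX isoP isoX noniso by blast

end
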